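(* Let $\Omega\subset\mathbb{R}^N$ be a bounded open set, $D=\operatorname{diam}(\Omega)$, and let $p,q:\Omega\to[1,\infty)$ be measurable with $q(x)\le p(x)\le p_+<\infty$ for all $x\in\Omega$. Let $K\subset\Omega$ be compact with $|K|=0$, and let $\varphi(t)=|\{x\in\Omega:d_K(x)<t\}|$. Let $\omega:(0,D]\to[0,\infty)$ be continuous and strictly decreasing, $\omega_0=\omega(D)$, with inverse $\omega^{-1}$ defined on the range of $\omega$; set $\varphi(\omega^{-1}(y)):=0$ for $y\ge\sup\omega$. Assume there is $c>0$ such that $$\frac{1}{p(x)-q(x)}\le c\,\omega(d_K(x))\quad\text{for a.e. } x\in\Omega\setminus K,$$ and $$\int_{\omega_0}^\infty\varphi(\omega^{-1}(y))\,a^y\,dy<\infty\quad\text{for all } a>1.$$ Then $L^{p(\cdot)}(\Omega)$ is almost-compactly embedded in $L^{q(\cdot)}(\Omega)$.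
   Context: $d_K(x)=\operatorname{dist}(x,K)$. The left side $\frac1{p(x)-q(x)}$ is interpreted as $+\infty$ where $p(x)=q(x)$. For measurable $e:\Omega\to[1,\infty)$, $\|u\|_{e(\cdot)}=\inf\{\lambda>0:\int_\Omega|u(x)/\lambda|^{e(x)}dx\le1\}$ and $L^{e(\cdot)}(\Omega)$ is the set of measurable $u$ with finite norm. Almost-compact embedding: for Banach function spaces $X,Y$ on $\Omega$, $X$ is almost-compactly embedded in $Y$ if for every sequence $\{E_n\}$ of measurable subsets of $\Omega$ with $\chi_{E_n}\to0$ pointwise a.e. one has $\lim_{n\to\infty}\sup_{\|u\|_X\le1}\|u\chi_{E_n}\|_Y=0$. *)

theory Defs
  imports "HOL-Analysis.Analysis"
begin

definition var_modular :: "('a::euclidean_space \<Rightarrow> real) \<Rightarrow> 'a set \<Rightarrow> ('a \<Rightarrow> real) \<Rightarrow> ennreal" where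
  "var_modular e \<Omega> u = (\<integral>\<^sup>+ x. ennreal (\<bar>u x\<bar> powr e x) * indicator \<Omega> x \<partial>lebesgue)"

text \<open>Luxemburg norm (value infinity when no admissible lambda exists).\<close>
definition var_norm :: "('a::euclidean_space \<Rightarrow> real) \<Rightarrow> 'a set \<Rightarrow> ('a \<Rightarrow> real) \<Rightarrow> ennreal" where
  "var_norm e \<Omega> u = (INF l\<in>{l::real. l > 0 \<and> var_modular e \<Omega> (\<lambda>x. u x / l) \<le> 1}. ennreal l)"

definition var_Lp :: "('a::euclidean_space \<Rightarrow> real) \<Rightarrow> 'a set \<Rightarrow> ('a \<Rightarrow> real) set" where
  "var_Lp e \<Omega> = {u. u \<in> borel_measurable (lebesgue_on \<Omega>) \<and> var_norm e \<Omega> u < \<infinity>}"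

definition almost_compact_emb ::
  "'a::euclidean_space set \<Rightarrow> ('a \<Rightarrow> real) set \<Rightarrow> (('a \<Rightarrow> real) \<Rightarrow> ennreal) \<Rightarrow> (('a \<Rightarrow> real) \<Rightarrow> ennreal) \<Rightarrow> bool" where
  "almost_compact_emb \<Omega> X normX normY \<longleftrightarrow>
     (\<forall>E :: nat \<Rightarrow> 'a set.
        (\<forall>n. E n \<in> sets lebesgue \<and> E n \<subseteq> \<Omega>) \<and>
        (AE x in lebesgue. x \<in> \<Omega> \<longrightarrow> (\<lambda>n. indicator (E n) x :: real) \<longlonglongrightarrow> 0)
        \<longrightarrow> (\<lambda>n. SUP u\<in>{u \<in> X. normX u \<le> 1}. normY (\<lambda>x. u x * indicator (E n) x)) \<longlonglongrightarrow> 0)"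

end

theory Submission
  imports Defs
begin


lemma key_ineq:
  fixes s P Q pp l c W :: real
  assumes s: "0 \<le> s" and Q1: "1 \<le> Q" and QP: "Q < P" and Qpp: "Q \<le> pp"
    and l: "0 < l" "l \<le> 1" and c: "0 < c" and W: "0 \<le> W" and h: "1 / (P - Q) \<le> c * W"
  shows "(s / l) powr Q \<le> 1/2 * (s / 2) powr P
          + ((2/l) powr pp) * ((2 * (2/l) powr pp) powr (pp * c)) powr W"
proof -
  define R where "R = 2 / l"
  define t where "t = s / 2"
  define C0 where "C0 = R powr pp"
  define M where "M = 2 * C0"
  define A where "A = M powr (pp * c)"
  have R2: "2 \<le> R" using l by (simp add: R_def field_simps)
  have pp1: "1 \<le> pp" using Q1 Qpp by linarith
  have RQ: "R powr Q \<le> C0" unfolding C0_def using R2 Qpp by (intro powr_mono) auto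
  have C01: "1 \<le> C0" unfolding C0_def using R2 pp1 by (intro ge_one_powr_ge_zero) auto
  have M1: "1 \<le> M" using C01 by (simp add: M_def)
  have A1: "1 \<le> A" unfolding A_def using M1 pp1 c by (intro ge_one_powr_ge_zero) auto
  have AW: "1 \<le> A powr W" using A1 W by (intro ge_one_powr_ge_zero) auto
  have sl: "s / l = R * t" using l by (simp add: R_def t_def field_simps)
  have t0: "0 \<le> t" using s by (simp add: t_def)
  have goal: "(R * t) powr Q \<le> 1/2 * t powr P + C0 * A powr W"
  proof (cases "(R * t) powr Q \<le> 1/2 * t powr P")
    case True
    moreover have "0 \<le> C0 * A powr W" using C01 by simp
    ultimately show ?thesis by linarith
  next
    case False
    hence F: "1/2 * t powr P < (R * t) powr Q" by simp
    have RtQ: "(R * t) powr Q = R powr Q * t powr Q" using R2 t0 by (simp add: powr_mult)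
    show ?thesis
    proof (cases "t \<le> 1")
      case True
      have "t powr Q \<le> 1" using True t0 Q1 by (intro powr_le1) auto
      hence "(R * t) powr Q \<le> R powr Q" using RtQ by (simp add: mult_left_le)
      also have "\<dots> \<le> C0" by (rule RQ)
      also have "\<dots> \<le> C0 * A powr W" using AW C01 by simp
      moreover have "0 \<le> 1/2 * t powr P" by simp
      ultimately show ?thesis by linarith
    next
      case False
      hence t1: "1 < t" by simp
      have tP: "t powr P = t powr (P - Q) * t powr Q" by (simp add: powr_add[symmetric])
      have tQpos: "0 < t powr Q" using t1 by simp
      have "t powr (P - Q) * t powr Q < 2 * R powr Q * t powr Q"
        using F tP RtQ by simp
      hence "t powr (P - Q) < 2 * R powr Q" using tQpos by simp
      also have "\<dots> \<le> M" using RQ by (simp add: M_def)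
      finally have tPQ: "t powr (P - Q) < M" .
      have "t = (t powr (P - Q)) powr (1 / (P - Q))" using QP t1 by (simp add: powr_powr)
      also have "\<dots> < M powr (1 / (P - Q))" using tPQ QP by (intro powr_less_mono2) auto
      also have "\<dots> \<le> M powr (c * W)" using M1 h by (intro powr_mono) auto
      finally have tM: "t < M powr (c * W)" .
      have "t powr Q \<le> t powr pp" using t1 Qpp by (intro powr_mono) auto
      also have "\<dots> \<le> (M powr (c * W)) powr pp" using tM t0 pp1 by (intro powr_mono2) auto
      also have "\<dots> = A powr W" unfolding A_def by (simp add: powr_powr mult_ac)
      finally have "t powr Q \<le> A powr W" .
      hence "R powr Q * t powr Q \<le> C0 * A powr W" using RQ C01
        by (intro mult_mono) auto
      hence "(R * t) powr Q \<le> C0 * A powr W" using RtQ by simp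
      moreover have "0 \<le> 1/2 * t powr P" by simp
      ultimately show ?thesis by linarith
    qed
  qed
  have e1: "(2/l) powr pp * ((2 * (2/l) powr pp) powr (pp*c)) powr W = C0 * A powr W"
    by (simp only: C0_def M_def A_def R_def)
  have e2: "s / 2 = t" by (simp add: t_def)
  show ?thesis unfolding e1 e2 sl by (rule goal)
qed


lemma G_finite:
  fixes \<Omega> K :: "'n::euclidean_space set" and \<omega> :: "real \<Rightarrow> real" and A :: real
  assumes op: "open \<Omega>" and bd: "bounded \<Omega>" and cK: "compact K" and KO: "K \<subseteq> \<Omega>" and Kne: "K \<noteq> {}"
    and cont: "continuous_on {0<..diameter \<Omega>} \<omega>"
    and mono: "strict_antimono_on {0<..diameter \<Omega>} \<omega>"
    and A: "1 < A"
    and hyp: "(\<integral>\<^sup>+ y. ennreal ((if y \<in> \<omega> ` {0<..diameter \<Omega>}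
                      then measure lebesgue {x \<in> \<Omega>. infdist x K < the_inv_into {0<..diameter \<Omega>} \<omega> y}
                      else 0) * A powr y) * indicator {\<omega> (diameter \<Omega>)..} y \<partial>lborel) < \<infinity>"
  shows "(\<lambda>x. ennreal (A powr \<omega> (infdist x K)) * indicator (\<Omega> - K) x) \<in> borel_measurable lborel
     \<and> (\<integral>\<^sup>+ x. ennreal (A powr \<omega> (infdist x K)) * indicator (\<Omega> - K) x \<partial>lborel) < \<infinity>"
proof -
  define D where "D = diameter \<Omega>"
  define w0 where "w0 = \<omega> D"
  define U where "U = \<Omega> - K"
  define R where "R = (\<lambda>x. indicator U x *\<^sub>R \<omega> (infdist x K))"
  define tinv where "tinv = the_inv_into {0<..D} \<omega>"
  define phi where "phi = (\<lambda>y. if y \<in> \<omega> ` {0<..D} then measure lebesgue {x \<in> \<Omega>. infdist x K < tinv y} else 0)"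
  define h where "h = (\<lambda>y. ennreal (phi y * A powr y) * indicator {w0..} y)"
  have hyp': "integral\<^sup>N lborel h < \<infinity>" using hyp unfolding h_def phi_def tinv_def w0_def D_def .
  have clK: "closed K" using cK by (rule compact_imp_closed)
  have Uopen: "open U" unfolding U_def using op clK by auto
  have dU: "0 < infdist x K \<and> infdist x K \<le> D" if "x \<in> U" for x
  proof
    show "0 < infdist x K" using that clK Kne by (auto simp: U_def intro!: infdist_pos_not_in_closed)
    obtain k where k: "k \<in> K" using Kne by blast
    have "infdist x K \<le> dist x k" using k by (rule infdist_le)
    also have "\<dots> \<le> D" unfolding D_def using bd that k KO by (auto simp: U_def intro!: diameter_bounded_bound)
    finally show "infdist x K \<le> D" .
  qed
  have inj: "inj_on \<omega> {0<..D}" using mono unfolding D_def strict_antimono_iff_antimono by blast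
  have mono': "strict_antimono_on {0<..D} \<omega>" using mono by (simp add: D_def)
  have anti: "\<omega> b \<le> \<omega> a" if "a \<in> {0<..D}" "b \<in> {0<..D}" "a \<le> b" for a b
  proof (cases "a = b")
    case False
    then have "a < b" using that by simp
    then show ?thesis using monotone_onD[OF mono' that(1,2)] by simp
  qed simp
  have Rcont: "continuous_on U (\<lambda>x. \<omega> (infdist x K))"
    by (rule continuous_on_compose2[OF cont continuous_on_infdist[OF continuous_on_id]])
       (use dU in \<open>auto simp: D_def\<close>)
  have Rb: "R \<in> borel_measurable borel"
    unfolding R_def using Uopen Rcont by (intro borel_measurable_continuous_on_indicator) auto
  have Rl[measurable]: "R \<in> borel_measurable lborel" using Rb by simp
  have Usets[measurable]: "U \<in> sets lborel" using Uopen by simp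
  have idm[measurable]: "(\<lambda>x. infdist x K) \<in> borel_measurable lborel"
    using borel_measurable_continuous_onI[OF continuous_on_infdist[OF continuous_on_id]] by simp
  define f where "f = (\<lambda>(x::'n) y. ennreal (ln A * A powr y) * indicator {p. fst p \<in> U \<and> w0 \<le> snd p \<and> snd p < R (fst p)} (x, y))"
  have fm[measurable]: "case_prod f \<in> borel_measurable (lborel \<Otimes>\<^sub>M lborel)"
    unfolding f_def by measurable
  have Dpos: "0 < D" if "x \<in> U" for x using dU[OF that] by linarith
  have w0r: "w0 \<le> \<omega> (infdist x K)" if "x \<in> U" for x
    unfolding w0_def using dU[OF that] Dpos[OF that] by (intro anti) auto
  have Aw: "A powr a \<le> A powr b" if "a \<le> b" for a b using A that by (intro powr_mono) auto
  have deriv: "DERIV (\<lambda>y. A powr y) y :> ln A * A powr y" for y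
    using has_real_derivative_const_powr[where f="\<lambda>y. y" and f'="\<lambda>_. 1" and a=A and x=y] by simp
  have Geq: "ennreal (A powr \<omega> (infdist x K)) * indicator U x
      = ennreal (A powr w0) * indicator U x + (\<integral>\<^sup>+ y. f x y \<partial>lborel)" for x
  proof (cases "x \<in> U")
    case False
    then show ?thesis by (simp add: f_def)
  next
    case True
    define r where "r = \<omega> (infdist x K)"
    have Rx: "R x = r" using True by (simp add: R_def r_def)
    have wr: "w0 \<le> r" using w0r[OF True] by (simp add: r_def)
    have "(\<integral>\<^sup>+ y. f x y \<partial>lborel) = (\<integral>\<^sup>+ y. ennreal (ln A * A powr y) * indicator {w0..<r} y \<partial>lborel)"
      by (intro nn_integral_cong) (simp add: f_def Rx True indicator_def)
    also have "\<dots> = (\<integral>\<^sup>+ y. ennreal (ln A * A powr y) * indicator {w0..r} y \<partial>lborel)"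
      by (intro nn_integral_cong_AE) (use AE_lborel_singleton[of r] in \<open>eventually_elim, auto simp: indicator_def\<close>)
    also have "\<dots> = ennreal (A powr r - A powr w0)"
      by (rule nn_integral_FTC_Icc[OF _ deriv _ wr]) (use A in auto)
    finally have I: "(\<integral>\<^sup>+ y. f x y \<partial>lborel) = ennreal (A powr r - A powr w0)" .
    show ?thesis using True Aw[OF wr]
      by (simp add: I r_def[symmetric] ennreal_plus[symmetric] del: ennreal_plus)
  qed
  have Gm: "(\<lambda>x. ennreal (A powr \<omega> (infdist x K)) * indicator (\<Omega> - K) x) \<in> borel_measurable lborel"
  proof -
    have "(\<lambda>x. ennreal (A powr \<omega> (infdist x K)) * indicator (\<Omega> - K) x) = (\<lambda>x. ennreal (A powr R x) * indicator U x)"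
      by (auto simp: R_def U_def indicator_def fun_eq_iff)
    moreover have "(\<lambda>x. ennreal (A powr R x) * indicator U x) \<in> borel_measurable lborel" by measurable
    ultimately show ?thesis by simp
  qed
  define S where "S = (\<lambda>y. {x \<in> \<Omega>. y \<in> \<omega> ` {0<..D} \<and> infdist x K < tinv y})"
  have Ssets: "S y \<in> sets lborel" for y
  proof -
    have "S y = \<Omega> \<inter> {x. y \<in> \<omega> ` {0<..D} \<and> infdist x K < tinv y}" by (auto simp: S_def)
    moreover have "{x. y \<in> \<omega> ` {0<..D} \<and> infdist x K < tinv y} \<in> sets lborel" by measurable
    moreover have "\<Omega> \<in> sets lborel" using op by simp
    ultimately show ?thesis by simp
  qed
  have Sfin: "emeasure lborel (S y) = ennreal (phi y)" for y
  proof (cases "y \<in> \<omega> ` {0<..D}")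
    case True
    have "emeasure lborel (S y) < \<infinity>"
      by (rule le_less_trans[OF emeasure_mono[of "S y" \<Omega>] emeasure_bounded_finite[OF bd]]) (auto simp: S_def op)
    hence "emeasure lborel (S y) = ennreal (measure lborel (S y))" by (simp add: emeasure_eq_ennreal_measure)
    also have "measure lborel (S y) = measure lebesgue (S y)" using Ssets by simp
    finally show ?thesis using True by (simp add: phi_def S_def)
  next
    case False
    then show ?thesis by (simp add: phi_def S_def)
  qed
  have fle: "f x y \<le> ennreal (ln A * A powr y) * indicator {w0..} y * indicator (S y) x" for x y
  proof (cases "x \<in> U \<and> w0 \<le> y \<and> y < R x")
    case False
    then show ?thesis by (simp add: f_def)
  next
    case True
    define d where "d = infdist x K"
    have xU: "x \<in> U" and wy: "w0 \<le> y" and yR: "y < \<omega> d" using True by (auto simp: R_def d_def)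
    have d: "0 < d" "d \<le> D" using dU[OF xU] by (auto simp: d_def)
    have "continuous_on {d..D} \<omega>" by (rule continuous_on_subset[OF cont]) (use d in \<open>auto simp: D_def\<close>)
    obtain t where t: "d \<le> t" "t \<le> D" "\<omega> t = y"
      using IVT2'[of \<omega> D y d] wy yR d \<open>continuous_on {d..D} \<omega>\<close> by (auto simp: w0_def)
    have "t \<noteq> d" using t yR by auto
    hence dt: "d < t" using t by simp
    have tD: "t \<in> {0<..D}" using t d by auto
    have yran: "y \<in> \<omega> ` {0<..D}" using tD t by auto
    have "tinv y = t" unfolding tinv_def using the_inv_into_f_f[OF inj tD] t by simp
    hence "x \<in> S y" using xU yran dt by (auto simp: S_def U_def d_def)
    then show ?thesis using wy by (simp add: f_def True)
  qed
  have phi0: "0 \<le> phi y" for y by (simp add: phi_def)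
  have lnA: "0 < ln A" using A by simp
  have fsw[measurable]: "(\<lambda>(y, x). f x y) \<in> borel_measurable (lborel \<Otimes>\<^sub>M lborel)"
    unfolding f_def by measurable
  define k where "k = (\<lambda>y. \<integral>\<^sup>+ x. f x y \<partial>lborel)"
  have km[measurable]: "k \<in> borel_measurable lborel"
    unfolding k_def by (rule lborel.borel_measurable_nn_integral[OF fsw])
  have kle: "k y \<le> ennreal (ln A) * h y" for y
  proof -
    have "k y \<le> (\<integral>\<^sup>+ x. (ennreal (ln A * A powr y) * indicator {w0..} y) * indicator (S y) x \<partial>lborel)"
      unfolding k_def by (intro nn_integral_mono fle)
    also have "\<dots> = (ennreal (ln A * A powr y) * indicator {w0..} y) * ennreal (phi y)"
      using Ssets by (simp add: nn_integral_cmult_indicator Sfin)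
    also have "\<dots> = ennreal (ln A) * h y"
    proof -
      have E: "ennreal (ln A * A powr y) * ennreal (phi y) = ennreal (ln A) * ennreal (phi y * A powr y)"
        using lnA phi0[of y] by (simp add: ennreal_mult[symmetric] mult_ac)
      have "(ennreal (ln A * A powr y) * indicator {w0..} y) * ennreal (phi y)
          = (ennreal (ln A * A powr y) * ennreal (phi y)) * indicator {w0..} y" by (simp only: ac_simps)
      also have "\<dots> = (ennreal (ln A) * ennreal (phi y * A powr y)) * indicator {w0..} y" by (simp only: E)
      also have "\<dots> = ennreal (ln A) * h y" by (simp only: h_def ac_simps)
      finally show ?thesis .
    qed
    finally show ?thesis .
  qed
  define k' where "k' = (\<lambda>y. ennreal (1 / ln A) * k y)"
  have inv1: "ennreal (1 / ln A) * ennreal (ln A) = 1"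
    using lnA by (simp add: ennreal_mult[symmetric])
  have k'le: "k' y \<le> h y" for y
  proof -
    have "k' y \<le> ennreal (1 / ln A) * (ennreal (ln A) * h y)"
      unfolding k'_def by (intro mult_left_mono kle) auto
    also have "\<dots> = h y" by (simp add: mult.assoc[symmetric] inv1)
    finally show ?thesis .
  qed
  have kk: "k y = ennreal (ln A) * k' y" for y
    unfolding k'_def by (simp add: mult.assoc[symmetric] inv1 mult.commute[of "ennreal (ln A)"])
  have k'm: "k' \<in> borel_measurable lborel" unfolding k'_def by measurable
  have kint: "integral\<^sup>N lborel k < \<infinity>"
  proof -
    have "integral\<^sup>N lborel k = ennreal (ln A) * integral\<^sup>N lborel k'"
    proof -
      have "k = (\<lambda>y. ennreal (ln A) * k' y)" using kk by auto
      then show ?thesis by (simp only: nn_integral_cmult[OF k'm])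
    qed
    also have "\<dots> \<le> ennreal (ln A) * integral\<^sup>N lborel h"
      by (intro mult_left_mono nn_integral_mono k'le) auto
    also have "\<dots> < \<infinity>" using hyp' by (simp add: ennreal_mult_less_top)
    finally show ?thesis .
  qed
  have Ufin: "emeasure lborel U < \<infinity>"
    by (rule le_less_trans[OF emeasure_mono[of U \<Omega>] emeasure_bounded_finite[OF bd]]) (auto simp: U_def op)
  have "(\<integral>\<^sup>+ x. ennreal (A powr \<omega> (infdist x K)) * indicator (\<Omega> - K) x \<partial>lborel)
      = (\<integral>\<^sup>+ x. ennreal (A powr w0) * indicator U x + (\<integral>\<^sup>+ y. f x y \<partial>lborel) \<partial>lborel)"
    using Geq by (simp add: U_def)
  also have "\<dots> = ennreal (A powr w0) * emeasure lborel U + (\<integral>\<^sup>+ x. (\<integral>\<^sup>+ y. f x y \<partial>lborel) \<partial>lborel)"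
  proof -
    have "(\<integral>\<^sup>+ x. ennreal (A powr w0) * indicator U x \<partial>lborel) = ennreal (A powr w0) * emeasure lborel U"
      by (rule nn_integral_cmult_indicator[OF Usets])
    moreover have "(\<lambda>x. \<integral>\<^sup>+ y. f x y \<partial>lborel) \<in> borel_measurable lborel"
      by (rule lborel.borel_measurable_nn_integral[OF fm])
    moreover have "(\<lambda>x. ennreal (A powr w0) * indicator U x) \<in> borel_measurable lborel" by simp
    ultimately show ?thesis by (simp add: nn_integral_add)
  qed
  also have "(\<integral>\<^sup>+ x. (\<integral>\<^sup>+ y. f x y \<partial>lborel) \<partial>lborel) = integral\<^sup>N lborel k"
    unfolding k_def by (rule lborel_pair.Fubini'[OF fm, symmetric])
  also have "ennreal (A powr w0) * emeasure lborel U + integral\<^sup>N lborel k < \<infinity>"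
    using kint Ufin by (simp add: ennreal_mult_less_top)
  finally show ?thesis using Gm by simp
qed


theorem lemma3p8:
  fixes \<Omega> K :: "'n::euclidean_space set"
    and p q :: "'n \<Rightarrow> real" and p_plus c :: real and \<omega> :: "real \<Rightarrow> real"
  assumes "open \<Omega>" and "bounded \<Omega>"
    and "p \<in> borel_measurable (lebesgue_on \<Omega>)" and "q \<in> borel_measurable (lebesgue_on \<Omega>)"
    and "\<And>x. x \<in> \<Omega> \<Longrightarrow> 1 \<le> q x \<and> q x \<le> p x \<and> p x \<le> p_plus"
    and "compact K" and "K \<subseteq> \<Omega>" and "K \<noteq> {}" and "emeasure lebesgue K = 0"
    and "continuous_on {0<..diameter \<Omega>} \<omega>"
    and "strict_antimono_on {0<..diameter \<Omega>} \<omega>"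
    and "\<And>t. t \<in> {0<..diameter \<Omega>} \<Longrightarrow> 0 \<le> \<omega> t"
    and "c > 0"
    and "AE x in lebesgue. x \<in> \<Omega> - K \<longrightarrow>
           (if p x = q x then (\<infinity>::ereal) else ereal (1 / (p x - q x)))
             \<le> ereal (c * \<omega> (infdist x K))"
    and "\<And>a::real. a > 1 \<Longrightarrow>
           (\<integral>\<^sup>+ y. ennreal ((if y \<in> \<omega> ` {0<..diameter \<Omega>}
                      then measure lebesgue {x \<in> \<Omega>. infdist x K < the_inv_into {0<..diameter \<Omega>} \<omega> y}
                      else 0) * a powr y) * indicator {\<omega> (diameter \<Omega>)..} y \<partial>lborel) < \<infinity>"
  shows "almost_compact_emb \<Omega> (var_Lp p \<Omega>) (var_norm p \<Omega>) (var_norm q \<Omega>)"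

proof -
  obtain x0 where x0: "x0 \<in> K" using assms(8) by blast
  have pp1: "1 \<le> p_plus" using assms(5)[of x0] x0 assms(7) by auto
  have clK: "closed K" using assms(6) by (rule compact_imp_closed)
  have Kn: "K \<in> null_sets lebesgue"
    using assms(9) clK by (auto simp: null_sets_def)
  have Osets: "\<Omega> \<in> sets lebesgue" using assms(1) by simp
  have dK: "0 < infdist x K \<and> infdist x K \<le> diameter \<Omega>" if "x \<in> \<Omega>" "x \<notin> K" for x
  proof
    show "0 < infdist x K" using that clK assms(8) by (auto intro!: infdist_pos_not_in_closed)
    have "infdist x K \<le> dist x x0" using x0 by (rule infdist_le)
    also have "\<dots> \<le> diameter \<Omega>" using assms(2,7) that x0 by (auto intro!: diameter_bounded_bound)
    finally show "infdist x K \<le> diameter \<Omega>" .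
  qed
  have key: "\<exists>N. \<forall>n\<ge>N. (SUP u\<in>{u \<in> var_Lp p \<Omega>. var_norm p \<Omega> u \<le> 1}.
               var_norm q \<Omega> (\<lambda>x. u x * indicator (E n) x)) \<le> ennreal l"
    if l: "0 < l" "l \<le> 1" and Eh: "\<forall>n. E n \<in> sets lebesgue \<and> E n \<subseteq> \<Omega>"
      and Econv: "AE x in lebesgue. x \<in> \<Omega> \<longrightarrow> (\<lambda>n. indicator (E n) x :: real) \<longlonglongrightarrow> 0"
    for l E
  proof -
    define C0 where "C0 = (2/l) powr p_plus"
    define A where "A = (2 * (2/l) powr p_plus) powr (p_plus * c)"
    have C01: "1 \<le> C0" unfolding C0_def using l pp1 by (intro ge_one_powr_ge_zero) (auto simp: field_simps)
    have A1: "1 < A" unfolding A_def using C01 pp1 assms(13) by (intro gr_one_powr) (auto simp: C0_def[symmetric])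
    define G where "G = (\<lambda>x. ennreal (A powr \<omega> (infdist x K)) * indicator (\<Omega> - K) x)"
    have GG: "G \<in> borel_measurable lborel \<and> integral\<^sup>N lborel G < \<infinity>"
      unfolding G_def by (rule G_finite[OF assms(1,2,6,7,8,10,11) A1 assms(15)[OF A1]])
    have Gm[measurable]: "G \<in> borel_measurable lebesgue" using GG by (intro measurable_completion) auto
    have Gi: "integral\<^sup>N lebesgue G < \<infinity>" using GG by (simp add: nn_integral_completion)
    have Em[measurable]: "E n \<in> sets lebesgue" for n using Eh by auto
    have lim: "(\<lambda>n. \<integral>\<^sup>+ x. G x * indicator (E n) x \<partial>lebesgue) \<longlonglongrightarrow> (\<integral>\<^sup>+ x. 0 \<partial>(lebesgue :: 'n measure))"
    proof (rule nn_integral_dominated_convergence[where w=G])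
      show "AE x in lebesgue. G x * indicator (E j) x \<le> G x" for j
        by (intro AE_I2) (simp add: indicator_def)
      show "integral\<^sup>N lebesgue G < \<infinity>" by (rule Gi)
      show "AE x in lebesgue. (\<lambda>i. G x * indicator (E i) x) \<longlonglongrightarrow> 0"
        using Econv
      proof eventually_elim
        case (elim x)
        show ?case
        proof (cases "x \<in> \<Omega>")
          case False
          then show ?thesis by (simp add: G_def)
        next
          case True
          then have "(\<lambda>n. indicator (E n) x :: real) \<longlonglongrightarrow> 0" using elim by simp
          then have "eventually (\<lambda>n. dist (indicator (E n) x :: real) 0 < 1) sequentially"
            by (rule tendstoD) simp
          then have "eventually (\<lambda>n. G x * indicator (E n) x = 0) sequentially"
            by eventually_elim (auto simp: indicator_def split: if_splits)
          then show ?thesis by (rule tendsto_eventually)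
        qed
      qed
    qed measurable
    have c2: "0 < ennreal (1 / (2 * C0))" using C01 by simp
    obtain N where N: "\<And>n. n \<ge> N \<Longrightarrow> (\<integral>\<^sup>+ x. G x * indicator (E n) x \<partial>lebesgue) < ennreal (1 / (2 * C0))"
      using order_tendstoD(2)[OF lim[simplified] c2] unfolding eventually_sequentially by blast
    show ?thesis
    proof (intro exI allI impI SUP_least)
      fix n u assume n: "N \<le> n" and u: "u \<in> {u \<in> var_Lp p \<Omega>. var_norm p \<Omega> u \<le> 1}"
      have um: "u \<in> borel_measurable (lebesgue_on \<Omega>)" and un: "var_norm p \<Omega> u \<le> 1"
        using u by (auto simp: var_Lp_def)
      have "var_norm p \<Omega> u < 2" using un by (simp add: order_le_less_trans)
      then obtain l0 where l0: "0 < l0" "var_modular p \<Omega> (\<lambda>x. u x / l0) \<le> 1" "ennreal l0 < 2"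
        unfolding var_norm_def INF_less_iff by blast
      have l02: "l0 < 2" using l0(3) by (metis ennreal_less_iff ennreal_numeral zero_le_numeral l0(1) less_imp_le)
      define F where "F = (\<lambda>x. ennreal (\<bar>u x / 2\<bar> powr p x) * indicator \<Omega> x)"
      have pm[measurable]: "p \<in> borel_measurable (lebesgue_on \<Omega>)" by (rule assms(3))
      have um'[measurable]: "u \<in> borel_measurable (lebesgue_on \<Omega>)" by (rule um)
      have Fm[measurable]: "F \<in> borel_measurable lebesgue"
      proof -
        have "(\<lambda>x. ennreal (\<bar>u x / 2\<bar> powr p x)) \<in> borel_measurable (lebesgue_on \<Omega>)" by measurable
        then show ?thesis unfolding F_def
          by (subst (asm) borel_measurable_restrict_space_iff_ennreal) (use Osets in auto)
      qed
      have Fi: "integral\<^sup>N lebesgue F \<le> 1"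
      proof -
        have "integral\<^sup>N lebesgue F \<le> var_modular p \<Omega> (\<lambda>x. u x / l0)"
          unfolding var_modular_def F_def
        proof (intro nn_integral_mono)
          fix x
          show "ennreal (\<bar>u x / 2\<bar> powr p x) * indicator \<Omega> x \<le> ennreal (\<bar>u x / l0\<bar> powr p x) * indicator \<Omega> x"
          proof (cases "x \<in> \<Omega>")
            case True
            have "\<bar>u x\<bar> / 2 \<le> \<bar>u x\<bar> / l0"
              by (rule divide_left_mono) (use l0(1) l02 in auto)
            then have "\<bar>u x / 2\<bar> \<le> \<bar>u x / l0\<bar>" using l0(1) by (simp add: abs_div)
            then have "\<bar>u x / 2\<bar> powr p x \<le> \<bar>u x / l0\<bar> powr p x"
              using assms(5)[OF True] by (intro powr_mono2) auto
            then show ?thesis using True by (simp add: ennreal_leI)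
          qed simp
        qed
        then show ?thesis using l0(2) by simp
      qed
      have AEh: "AE x in lebesgue. (x \<in> \<Omega> - K \<longrightarrow>
           (if p x = q x then (\<infinity>::ereal) else ereal (1 / (p x - q x))) \<le> ereal (c * \<omega> (infdist x K))) \<and> x \<notin> K"
        using assms(14) AE_not_in[OF Kn] by eventually_elim auto
      have "var_modular q \<Omega> (\<lambda>x. u x * indicator (E n) x / l)
          \<le> (\<integral>\<^sup>+ x. ennreal (1/2) * F x + ennreal C0 * (G x * indicator (E n) x) \<partial>lebesgue)"
        unfolding var_modular_def
      proof (intro nn_integral_mono_AE)
        show "AE x in lebesgue. ennreal (\<bar>u x * indicator (E n) x / l\<bar> powr q x) * indicator \<Omega> x
             \<le> ennreal (1/2) * F x + ennreal C0 * (G x * indicator (E n) x)"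
          using AEh
        proof eventually_elim
          case (elim x)
          show ?case
          proof (cases "x \<in> E n")
            case False
            then show ?thesis by simp
          next
            case True
            have xO: "x \<in> \<Omega>" using True Eh by auto
            have xK: "x \<notin> K" using elim by simp
            have h: "(if p x = q x then (\<infinity>::ereal) else ereal (1 / (p x - q x))) \<le> ereal (c * \<omega> (infdist x K))"
              using elim xO xK by simp
            have pq: "p x \<noteq> q x" using h by (cases "p x = q x") auto
            have h': "1 / (p x - q x) \<le> c * \<omega> (infdist x K)" using h pq by simp
            have W: "0 \<le> \<omega> (infdist x K)" using dK[OF xO xK] by (intro assms(12)) auto
            have qp: "1 \<le> q x" "q x < p x" "q x \<le> p_plus" using assms(5)[OF xO] pq by auto
            have ki: "(\<bar>u x\<bar> / l) powr q x \<le> 1/2 * (\<bar>u x\<bar> / 2) powr p x + C0 * A powr \<omega> (infdist x K)"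
              unfolding C0_def A_def
              by (rule key_ineq[OF abs_ge_zero qp l assms(13) W h'])
            have e1: "\<bar>u x * indicator (E n) x / l\<bar> = \<bar>u x\<bar> / l" using True l by (simp add: abs_div)
            have e2: "\<bar>u x / 2\<bar> = \<bar>u x\<bar> / 2" by (simp add: abs_div)
            have "ennreal ((\<bar>u x\<bar> / l) powr q x) \<le> ennreal (1/2 * (\<bar>u x\<bar> / 2) powr p x + C0 * A powr \<omega> (infdist x K))"
              by (rule ennreal_leI[OF ki])
            also have "\<dots> = ennreal (1/2) * ennreal ((\<bar>u x\<bar> / 2) powr p x) + ennreal C0 * ennreal (A powr \<omega> (infdist x K))"
            proof -
              have a: "ennreal (1/2 * (\<bar>u x\<bar> / 2) powr p x + C0 * A powr \<omega> (infdist x K))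
                  = ennreal (1/2 * (\<bar>u x\<bar> / 2) powr p x) + ennreal (C0 * A powr \<omega> (infdist x K))"
                by (rule ennreal_plus) (use C01 in auto)
              have b: "ennreal (1/2 * (\<bar>u x\<bar> / 2) powr p x) = ennreal (1/2) * ennreal ((\<bar>u x\<bar> / 2) powr p x)"
                by (rule ennreal_mult) auto
              have c: "ennreal (C0 * A powr \<omega> (infdist x K)) = ennreal C0 * ennreal (A powr \<omega> (infdist x K))"
                by (rule ennreal_mult) (use C01 in auto)
              show ?thesis by (simp only: a b c)
            qed
            finally show ?thesis using True xO xK l(1) by (simp add: e1 e2 F_def G_def)
          qed
        qed
      qed
      also have "\<dots> = ennreal (1/2) * integral\<^sup>N lebesgue F + ennreal C0 * (\<integral>\<^sup>+ x. G x * indicator (E n) x \<partial>lebesgue)"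
        by (subst nn_integral_add) (auto simp: nn_integral_cmult)
      also have "\<dots> \<le> ennreal (1/2) * 1 + ennreal C0 * ennreal (1 / (2 * C0))"
        by (intro add_mono mult_left_mono Fi less_imp_le[OF N[OF n]]) auto
      also have "\<dots> = 1"
      proof -
        have e: "ennreal C0 * ennreal (1 / (2 * C0)) = ennreal (1/2)"
          by (subst ennreal_mult[symmetric]) (use C01 in auto)
        have f: "ennreal (1/2) + ennreal (1/2) = 1"
          by (subst ennreal_plus[symmetric]) auto
        show ?thesis by (simp only: e f mult_1_right)
      qed
      finally have mod1: "var_modular q \<Omega> (\<lambda>x. u x * indicator (E n) x / l) \<le> 1" .
      show "var_norm q \<Omega> (\<lambda>x. u x * indicator (E n) x) \<le> ennreal l"
        unfolding var_norm_def by (rule INF_lower) (use l mod1 in auto)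
    qed
  qed
  show ?thesis
    unfolding almost_compact_emb_def
  proof (intro allI impI)
    fix E :: "nat \<Rightarrow> 'n set"
    assume E: "(\<forall>n. E n \<in> sets lebesgue \<and> E n \<subseteq> \<Omega>) \<and>
        (AE x in lebesgue. x \<in> \<Omega> \<longrightarrow> (\<lambda>n. indicator (E n) x :: real) \<longlonglongrightarrow> 0)"
    show "(\<lambda>n. SUP u\<in>{u \<in> var_Lp p \<Omega>. var_norm p \<Omega> u \<le> 1}. var_norm q \<Omega> (\<lambda>x. u x * indicator (E n) x)) \<longlonglongrightarrow> 0"
    proof (rule order_tendstoI)
      fix a :: ennreal assume "a < 0" then show "eventually (\<lambda>n. a < (SUP u\<in>{u \<in> var_Lp p \<Omega>. var_norm p \<Omega> u \<le> 1}. var_norm q \<Omega> (\<lambda>x. u x * indicator (E n) x))) sequentially"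
        by simp
    next
      fix a :: ennreal assume a: "0 < a"
      define l where "l = (if a = \<infinity> then 1 else min 1 (enn2real a / 2))"
      have l: "0 < l" "l \<le> 1" "ennreal l < a"
      proof -
        show "0 < l" "l \<le> 1" using a by (auto simp: l_def enn2real_positive_iff less_top)
        show "ennreal l < a"
        proof (cases "a = \<infinity>")
          case False
          then obtain r where r: "a = ennreal r" "0 < r" using a by (cases a) auto
          then show ?thesis using False by (simp add: l_def ennreal_less_iff)
        qed (simp add: l_def)
      qed
      obtain N where "\<forall>n\<ge>N. (SUP u\<in>{u \<in> var_Lp p \<Omega>. var_norm p \<Omega> u \<le> 1}.
               var_norm q \<Omega> (\<lambda>x. u x * indicator (E n) x)) \<le> ennreal l"
        using key[OF l(1,2)] E by blast
      then show "eventually (\<lambda>n. (SUP u\<in>{u \<in> var_Lp p \<Omega>. var_norm p \<Omega> u \<le> 1}. var_norm q \<Omega> (\<lambda>x. u x * indicator (E n) x)) < a) sequentially"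
        unfolding eventually_sequentially using l(3) by (meson order_le_less_trans)
    qed
  qed
qed

end
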